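(* Let $C,D\in\mathrm{Ch}_\Phi$ and let $\Psi$ be a root subsystem of $\Phi$. Then $C$ lifts $D_\Psi$ if and only if there exists a subset $X\subset\Phi^s(C)\cap\Phi^+(D)$ such that $\Psi=\mathbb R X\cap\Phi$. Moreover, if these conditions hold, then one can take $X=\Psi^s(D_\Psi)$.
   Context: $E$ is a finite-dimensional real Euclidean space with inner product $(\cdot,\cdot)$; $\Phi\subset E$ is a finite (reduced) root system (not necessarily spanning $E$, not necessarily crystallographic), with reflections $\omega_\alpha$ through $L_\alpha=\alpha^\perp$. A root subsystem is a nonempty $\Psi\subset\Phi$ stable under $\omega_\alpha$, $\alpha\in\Psi$. $\mathbb R X$ denotes the real linear span of $X$. For $X\subset\Phi$, $\mathrm{Ch}_X$ is the set of connected components of $E\setminus\bigcup_{\alpha\in X}L_\alpha$; for $D\in\mathrm{Ch}_\Phi$, $D_\Psi$ is the chamber of $\mathrm{Ch}_\Psi$ containing $D$. For $C\in\mathrm{Ch}_\Phi$, $\Phi^+(C)=\{\alpha\in\Phi:(e,\alpha)>0\ \forall e\in C\}$ and $\Phi^s(C)$ is the unique simple system of $\Phi$ contained in $\Phi^+(C)$ (a simple system is a linearly independent subset $S$ such that each root is a linear combination of elements of $S$ with all coefficients $\ge0$ or all $\le0$). Similarly $\Psi^+(F)$, $\Psi^s(F)$ for $F\in\mathrm{Ch}_\Psi$. A chamber $C\in\mathrm{Ch}_\Phi$ lifts $F\in\mathrm{Ch}_\Psi$ if $\Psi^s(F)\subset\Phi^s(C)$. *)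

theory Defs
  imports "HOL-Analysis.Analysis"
begin

text \<open>E is modelled by a type of class euclidean_space; (x,y) is the inner product x \<bullet> y.\<close>

definition refl_vec :: "'a::euclidean_space \<Rightarrow> 'a \<Rightarrow> 'a" where
  "refl_vec \<alpha> x = x - (2 * (x \<bullet> \<alpha>) / (\<alpha> \<bullet> \<alpha>)) *\<^sub>R \<alpha>"

definition hyperplane :: "'a::euclidean_space \<Rightarrow> 'a set" where
  "hyperplane \<alpha> = {x. x \<bullet> \<alpha> = 0}"

text \<open>Finite reduced root system (not necessarily spanning, not necessarily crystallographic).\<close>
definition root_system :: "'a::euclidean_space set \<Rightarrow> bool" where
  "root_system \<Phi> \<longleftrightarrow> finite \<Phi> \<and> 0 \<notin> \<Phi> \<and>
     (\<forall>\<alpha>\<in>\<Phi>. \<forall>\<beta>\<in>\<Phi>. refl_vec \<alpha> \<beta> \<in> \<Phi>) \<and>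
     (\<forall>\<alpha>\<in>\<Phi>. \<forall>c::real. c *\<^sub>R \<alpha> \<in> \<Phi> \<longrightarrow> c = 1 \<or> c = -1)"

definition root_subsystem :: "'a::euclidean_space set \<Rightarrow> 'a set \<Rightarrow> bool" where
  "root_subsystem \<Phi> \<Psi> \<longleftrightarrow> \<Psi> \<noteq> {} \<and> \<Psi> \<subseteq> \<Phi> \<and> (\<forall>\<alpha>\<in>\<Psi>. \<forall>\<beta>\<in>\<Psi>. refl_vec \<alpha> \<beta> \<in> \<Psi>)"

definition chambers :: "'a::euclidean_space set \<Rightarrow> 'a set set" where
  "chambers X = components (UNIV - (\<Union>\<alpha>\<in>X. hyperplane \<alpha>))"

definition chamber_of :: "'a::euclidean_space set \<Rightarrow> 'a set \<Rightarrow> 'a set" where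
  "chamber_of \<Psi> D = (THE F. F \<in> chambers \<Psi> \<and> D \<subseteq> F)"

definition pos_roots :: "'a::euclidean_space set \<Rightarrow> 'a set \<Rightarrow> 'a set" where
  "pos_roots \<Phi> C = {\<alpha>\<in>\<Phi>. \<forall>e\<in>C. e \<bullet> \<alpha> > 0}"

definition simple_system :: "'a::euclidean_space set \<Rightarrow> 'a set \<Rightarrow> bool" where
  "simple_system \<Phi> S \<longleftrightarrow> S \<subseteq> \<Phi> \<and> independent S \<and>
     (\<forall>\<alpha>\<in>\<Phi>. \<exists>c. \<alpha> = (\<Sum>s\<in>S. c s *\<^sub>R s) \<and>
        ((\<forall>s\<in>S. c s \<ge> 0) \<or> (\<forall>s\<in>S. c s \<le> 0)))"

definition simple_roots :: "'a::euclidean_space set \<Rightarrow> 'a set \<Rightarrow> 'a set" where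
  "simple_roots \<Phi> C = (THE S. simple_system \<Phi> S \<and> S \<subseteq> pos_roots \<Phi> C)"

definition lifts :: "'a::euclidean_space set \<Rightarrow> 'a set \<Rightarrow> 'a set \<Rightarrow> 'a set \<Rightarrow> bool" where
  "lifts \<Phi> \<Psi> C F \<longleftrightarrow> simple_roots \<Psi> F \<subseteq> simple_roots \<Phi> C"

end

theory Submission
  imports Defs
begin

lemma uniq_rep:
  fixes S :: "'a::euclidean_space set"
  assumes "independent S" "(\<Sum>s\<in>S. a s *\<^sub>R s) = (\<Sum>s\<in>S. b s *\<^sub>R s)" "x \<in> S"
  shows "a x = b x"
proof -
  have h: "(\<Sum>s\<in>S. (a s - b s) *\<^sub>R s) = 0"
    using assms(2) by (simp add: scaleR_diff_left sum_subtractf)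
  have ind: "\<forall>c. (\<Sum>v\<in>S. c v *\<^sub>R v) = 0 \<longrightarrow> (\<forall>v\<in>S. c v = 0)"
    using iffD1[OF independent_explicit assms(1)] by (rule conjunct2)
  have "\<forall>v\<in>S. a v - b v = 0" using mp[OF spec[OF ind, of "\<lambda>s. a s - b s"] h] by simp
  then show ?thesis using assms(3) by simp
qed

lemma refl_self: "\<alpha> \<noteq> 0 \<Longrightarrow> refl_vec \<alpha> \<alpha> = - \<alpha>"
  unfolding refl_vec_def by (simp add: algebra_simps scaleR_2)

lemma refl_invol: assumes "\<alpha> \<noteq> 0" shows "refl_vec \<alpha> (refl_vec \<alpha> x) = x"
proof -
  define k where "k = 2 * (x \<bullet> \<alpha>) / (\<alpha> \<bullet> \<alpha>)"
  have aa: "\<alpha> \<bullet> \<alpha> \<noteq> 0" using assms by simp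
  have "k * (\<alpha> \<bullet> \<alpha>) = 2 * (x \<bullet> \<alpha>)" using aa by (simp add: k_def)
  moreover have "(x - k *\<^sub>R \<alpha>) \<bullet> \<alpha> = x \<bullet> \<alpha> - k * (\<alpha> \<bullet> \<alpha>)" by (simp add: inner_diff_left)
  ultimately have "(x - k *\<^sub>R \<alpha>) \<bullet> \<alpha> = - (x \<bullet> \<alpha>)" by simp
  then have "2 * ((x - k *\<^sub>R \<alpha>) \<bullet> \<alpha>) / (\<alpha> \<bullet> \<alpha>) = - k"
    by (simp add: k_def)
  then show ?thesis unfolding refl_vec_def k_def[symmetric] by simp
qed

lemma rs_neg: "root_system \<Phi> \<Longrightarrow> \<alpha> \<in> \<Phi> \<Longrightarrow> - \<alpha> \<in> \<Phi>"
  unfolding root_system_def by (metis refl_self)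

lemma rs_reduced: "root_system \<Phi> \<Longrightarrow> \<alpha> \<in> \<Phi> \<Longrightarrow> c *\<^sub>R \<alpha> \<in> \<Phi> \<Longrightarrow> c = 1 \<or> c = -1"
  unfolding root_system_def by blast

lemma rs_nz: "root_system \<Phi> \<Longrightarrow> \<alpha> \<in> \<Phi> \<Longrightarrow> \<alpha> \<noteq> 0"
  unfolding root_system_def by blast

lemma rs_sub:
  assumes "root_system \<Phi>" "\<Psi> \<subseteq> \<Phi>" "\<forall>\<alpha>\<in>\<Psi>. \<forall>\<beta>\<in>\<Psi>. refl_vec \<alpha> \<beta> \<in> \<Psi>"
  shows "root_system \<Psi>"
  using assms unfolding root_system_def unfolding root_system_def
proof (intro conjI)
  show "finite \<Psi>" using assms finite_subset unfolding root_system_def by blast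
qed (use assms in \<open>auto simp: root_system_def; blast\<close>)+

lemma rs_span:
  assumes "root_system \<Phi>"
  shows "root_system (span T \<inter> \<Phi>)"
proof (rule rs_sub[OF assms])
  show "\<forall>\<alpha>\<in>span T \<inter> \<Phi>. \<forall>\<beta>\<in>span T \<inter> \<Phi>. refl_vec \<alpha> \<beta> \<in> span T \<inter> \<Phi>"
    using assms unfolding root_system_def refl_vec_def
    by (auto intro!: span_diff span_scale)
qed auto

lemma chamber_sign:
  assumes "C \<in> chambers X" "\<alpha> \<in> X"
  shows "(\<forall>e\<in>C. e \<bullet> \<alpha> > 0) \<or> (\<forall>e\<in>C. e \<bullet> \<alpha> < 0)"
proof (rule ccontr)
  assume "\<not> ?thesis"
  then obtain x y where xy: "x \<in> C" "y \<in> C" "x \<bullet> \<alpha> \<le> 0" "0 \<le> y \<bullet> \<alpha>" by force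
  have conn: "connected C" using assms(1) unfolding chambers_def by (rule in_components_connected)
  obtain z where "z \<in> C" "\<alpha> \<bullet> z = 0"
    using connected_ivt_hyperplane[OF conn xy(1,2), of \<alpha> 0] xy(3,4) by (auto simp: inner_commute)
  moreover have "C \<subseteq> UNIV - (\<Union>\<alpha>\<in>X. hyperplane \<alpha>)"
    using assms(1) unfolding chambers_def by (rule in_components_subset)
  ultimately show False using assms(2) by (auto simp: hyperplane_def inner_commute)
qed

lemma chamber_ne: "C \<in> chambers X \<Longrightarrow> C \<noteq> {}"
  unfolding chambers_def by (rule in_components_nonempty)

definition ncone :: "'a::real_vector set \<Rightarrow> 'a set" where
  "ncone S = {x. \<exists>c. (\<forall>s\<in>S. c s \<ge> 0) \<and> x = (\<Sum>s\<in>S. c s *\<^sub>R s)}"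

lemma ncone_0: "0 \<in> ncone S"
  unfolding ncone_def by (rule CollectI, rule exI[of _ "\<lambda>_. 0"]) simp

lemma ncone_add: "x \<in> ncone S \<Longrightarrow> y \<in> ncone S \<Longrightarrow> x + y \<in> ncone S"
  unfolding ncone_def
proof clarify
  fix c d :: "'a \<Rightarrow> real" assume "\<forall>s\<in>S. 0 \<le> c s" "\<forall>s\<in>S. 0 \<le> d s"
  then show "\<exists>e. (\<forall>s\<in>S. 0 \<le> e s) \<and> (\<Sum>s\<in>S. c s *\<^sub>R s) + (\<Sum>s\<in>S. d s *\<^sub>R s) = (\<Sum>s\<in>S. e s *\<^sub>R s)"
    by (intro exI[of _ "\<lambda>s. c s + d s"]) (simp add: scaleR_add_left sum.distrib)
qed

lemma ncone_scale: "x \<in> ncone S \<Longrightarrow> a \<ge> 0 \<Longrightarrow> a *\<^sub>R x \<in> ncone S"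
  unfolding ncone_def
proof clarify
  fix c :: "'a \<Rightarrow> real" assume "\<forall>s\<in>S. 0 \<le> c s" "a \<ge> 0"
  then show "\<exists>e. (\<forall>s\<in>S. 0 \<le> e s) \<and> a *\<^sub>R (\<Sum>s\<in>S. c s *\<^sub>R s) = (\<Sum>s\<in>S. e s *\<^sub>R s)"
    by (intro exI[of _ "\<lambda>s. a * c s"]) (simp add: scaleR_sum_right)
qed

lemma sum_delta_scaleR:
  fixes q :: real and S :: "'a::real_vector set"
  assumes "finite S" "y \<in> S"
  shows "(\<Sum>u\<in>S. (if u = y then q else 0) *\<^sub>R u) = q *\<^sub>R y"
proof -
  have "(\<Sum>u\<in>S. (if u = y then q else 0) *\<^sub>R u) = (\<Sum>u\<in>S. if u = y then q *\<^sub>R y else 0)"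
    by (rule sum.cong) auto
  then show ?thesis using assms by simp
qed

lemma ncone_base: "finite S \<Longrightarrow> s \<in> S \<Longrightarrow> s \<in> ncone S"
  unfolding ncone_def
  by (rule CollectI, rule exI[of _ "\<lambda>u. if u = s then 1 else 0"]) (simp add: sum_delta_scaleR)

lemma ncone_sum: "finite T \<Longrightarrow> (\<And>t. t \<in> T \<Longrightarrow> f t \<in> ncone S) \<Longrightarrow> sum f T \<in> ncone S"
  by (induction T rule: finite_induct) (auto intro: ncone_0 ncone_add)

lemma ncone_trans:
  assumes "finite T" "T \<subseteq> ncone S" "x \<in> ncone T"
  shows "x \<in> ncone S"
proof -
  obtain c where c: "\<forall>t\<in>T. c t \<ge> 0" "x = (\<Sum>t\<in>T. c t *\<^sub>R t)" using assms(3) unfolding ncone_def by blast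
  show ?thesis unfolding c(2) using assms(1,2) c(1) by (intro ncone_sum ncone_scale) auto
qed

lemma ncone_mono: "S \<subseteq> T \<Longrightarrow> finite T \<Longrightarrow> x \<in> ncone S \<Longrightarrow> x \<in> ncone T"
  by (rule ncone_trans[of S], auto intro: ncone_base finite_subset)

lemma exists_simple:
  assumes rs: "root_system \<Phi>" and C: "C \<in> chambers \<Phi>"
  shows "\<exists>S. simple_system \<Phi> S \<and> S \<subseteq> pos_roots \<Phi> C"
proof -
  define P where "P = pos_roots \<Phi> C"
  obtain e0 where e0: "e0 \<in> C" using chamber_ne[OF C] by blast
  have pos: "\<And>\<alpha>. \<alpha> \<in> P \<Longrightarrow> e0 \<bullet> \<alpha> > 0" using e0 unfolding P_def pos_roots_def by blast
  have PPhi: "P \<subseteq> \<Phi>" unfolding P_def pos_roots_def by blast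
  have dich: "\<alpha> \<in> P \<or> - \<alpha> \<in> P" if "\<alpha> \<in> \<Phi>" for \<alpha>
    using chamber_sign[OF C that] rs_neg[OF rs that] that unfolding P_def pos_roots_def by auto
  have finP: "finite P" using rs PPhi finite_subset unfolding root_system_def by blast
  define good where "good S \<longleftrightarrow> S \<subseteq> P \<and> P \<subseteq> ncone S" for S
  have "good P" unfolding good_def using finP ncone_base by blast
  then obtain S where gS: "good S" and minS: "\<And>S'. good S' \<Longrightarrow> card S \<le> card S'"
    using ex_has_least_nat[of good P card] by blast
  have SP: "S \<subseteq> P" and PS: "P \<subseteq> ncone S" using gS unfolding good_def by auto
  have finS: "finite S" using finP SP finite_subset by blast
  have claim1: "t \<notin> ncone (S - {t})" if "t \<in> S" for t
  proof
    assume tin: "t \<in> ncone (S - {t})"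
    have "S \<subseteq> ncone (S - {t})"
    proof
      fix u assume "u \<in> S" then show "u \<in> ncone (S - {t})"
        using tin finS by (cases "u = t") (auto intro: ncone_base)
    qed
    then have "P \<subseteq> ncone (S - {t})" using PS ncone_trans[OF finS] by blast
    then have "good (S - {t})" using SP unfolding good_def by blast
    then have "card S \<le> card (S - {t})" by (rule minS)
    moreover have "card (S - {t}) < card S" using card_Diff1_less[OF finS that] .
    ultimately show False by simp
  qed
  have key: False if xy: "x \<in> S" "y \<in> S" "x \<noteq> y" and pq: "p > 0" "q > 0"
    and inc: "p *\<^sub>R x - q *\<^sub>R y \<in> ncone S" for x y p q
  proof -
    obtain a where a: "\<forall>u\<in>S. a u \<ge> 0" "p *\<^sub>R x - q *\<^sub>R y = (\<Sum>u\<in>S. a u *\<^sub>R u)"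
      using inc unfolding ncone_def by blast
    define b where "b u = a u + (if u = y then q else 0) - (if u = x then p else 0)" for u
    have s1: "(\<Sum>u\<in>S. (if u = y then q else 0) *\<^sub>R u) = q *\<^sub>R y"
      using xy finS by (simp add: sum_delta_scaleR)
    have s2: "(\<Sum>u\<in>S. (if u = x then p else 0) *\<^sub>R u) = p *\<^sub>R x"
      using xy finS by (simp add: sum_delta_scaleR)
    have bsum: "(\<Sum>u\<in>S. b u *\<^sub>R u) = 0"
      unfolding b_def scaleR_diff_left scaleR_add_left sum_subtractf sum.distrib s1 s2 a(2)[symmetric]
      by simp
    have bnn: "b u \<ge> 0" if "u \<in> S" "u \<noteq> x" for u
      using a(1) that pq unfolding b_def by auto
    have by_: "b y \<ge> q" using a(1) xy unfolding b_def by auto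
    show False
    proof (cases "b x \<ge> 0")
      case True
      have bnn': "\<forall>u\<in>S. b u * (e0 \<bullet> u) \<ge> 0"
      proof
        fix u assume u: "u \<in> S"
        have "b u \<ge> 0" using bnn[OF u] True by (cases "u = x") auto
        moreover have "e0 \<bullet> u > 0" using pos SP u by blast
        ultimately show "b u * (e0 \<bullet> u) \<ge> 0" by simp
      qed
      have ey: "e0 \<bullet> y > 0" using pos SP xy by blast
      have "b y > 0" using by_ pq by simp
      then have "b y * (e0 \<bullet> y) > 0" using ey by simp
      also have "b y * (e0 \<bullet> y) \<le> (\<Sum>u\<in>S. b u * (e0 \<bullet> u))"
        using bnn' xy finS by (intro member_le_sum) auto
      also have "\<dots> = e0 \<bullet> (\<Sum>u\<in>S. b u *\<^sub>R u)" by (simp add: inner_sum_right)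
      finally show False using bsum by simp
    next
      case False
      have "0 = b x *\<^sub>R x + (\<Sum>u\<in>S - {x}. b u *\<^sub>R u)"
        using bsum sum.remove[OF finS xy(1), of "\<lambda>u. b u *\<^sub>R u"] by simp
      then have h: "(\<Sum>u\<in>S - {x}. b u *\<^sub>R u) = - (b x *\<^sub>R x)"
        by (simp add: eq_neg_iff_add_eq_0 add.commute)
      have bx: "b x \<noteq> 0" using False by simp
      have "x = (1 / (- b x)) *\<^sub>R (\<Sum>u\<in>S - {x}. b u *\<^sub>R u)"
        unfolding h using bx by simp
      also have "\<dots> = (\<Sum>u\<in>S - {x}. (b u / (- b x)) *\<^sub>R u)"
        by (simp add: scaleR_sum_right)
      finally have "x \<in> ncone (S - {x})"
        unfolding ncone_def using bnn False by (auto intro!: exI[of _ "\<lambda>u. b u / (- b x)"] divide_nonneg_pos)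
      then show False using claim1 xy by blast
    qed
  qed
  have claim2: "s \<bullet> t \<le> 0" if st: "s \<in> S" "t \<in> S" "s \<noteq> t" for s t
  proof (rule ccontr)
    assume "\<not> s \<bullet> t \<le> 0"
    then have stp: "s \<bullet> t > 0" by simp
    have snz: "s \<noteq> 0" using pos SP st by fastforce
    define k where "k = 2 * (t \<bullet> s) / (s \<bullet> s)"
    have kp: "k > 0" using stp snz by (simp add: k_def inner_commute)
    have "refl_vec s t \<in> \<Phi>" using rs st SP PPhi unfolding root_system_def by blast
    then have r: "t - k *\<^sub>R s \<in> \<Phi>" unfolding refl_vec_def k_def .
    from dich[OF r] show False
    proof
      assume "t - k *\<^sub>R s \<in> P"
      then have "1 *\<^sub>R t - k *\<^sub>R s \<in> ncone S" using PS by auto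
      then show False using key[of t s 1 k] st kp by auto
    next
      assume "- (t - k *\<^sub>R s) \<in> P"
      then have "k *\<^sub>R s - 1 *\<^sub>R t \<in> ncone S" using PS by auto
      then show False using key[of s t k 1] st kp by auto
    qed
  qed
  have indep: "independent S"
    unfolding independent_explicit
  proof (intro conjI allI impI ballI)
    show "finite S" by (rule finS)
    fix c assume c0: "(\<Sum>v\<in>S. c v *\<^sub>R v) = 0"
    define cp where "cp v = max (c v) 0" for v
    define cn where "cn v = max (- c v) 0" for v
    have cpn: "c v = cp v - cn v" for v unfolding cp_def cn_def by auto
    define v where "v = (\<Sum>s\<in>S. cp s *\<^sub>R s)"
    have v2: "v = (\<Sum>s\<in>S. cn s *\<^sub>R s)"
      using c0 unfolding v_def cpn scaleR_diff_left sum_subtractf by simp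
    have "v \<bullet> v = v \<bullet> (\<Sum>u\<in>S. cn u *\<^sub>R u)" by (subst (2) v2) (rule refl)
    also have "\<dots> = (\<Sum>s\<in>S. cp s *\<^sub>R s) \<bullet> (\<Sum>u\<in>S. cn u *\<^sub>R u)" unfolding v_def ..
    also have "\<dots> = (\<Sum>s\<in>S. \<Sum>u\<in>S. cp s * cn u * (s \<bullet> u))"
      by (simp only: inner_sum_left) (simp add: inner_sum_right sum_distrib_left mult_ac)
    also have "\<dots> \<le> 0"
    proof (intro sum_nonpos)
      fix s u assume "s \<in> S" "u \<in> S"
      show "cp s * cn u * (s \<bullet> u) \<le> 0"
      proof (cases "s = u")
        case True then show ?thesis unfolding cp_def cn_def by (auto simp: max_def)
      next
        case False
        then have "s \<bullet> u \<le> 0" using claim2 \<open>s \<in> S\<close> \<open>u \<in> S\<close> by blast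
        moreover have "cp s * cn u \<ge> 0" unfolding cp_def cn_def by simp
        ultimately show ?thesis by (simp add: mult_nonneg_nonpos)
      qed
    qed
    finally have "v \<bullet> v \<le> 0" .
    then have v0: "v = 0" by (metis inner_eq_zero_iff inner_ge_zero order_antisym)
    have "e0 \<bullet> v = (\<Sum>s\<in>S. cp s * (e0 \<bullet> s))" unfolding v_def by (simp add: inner_sum_right)
    then have "(\<Sum>s\<in>S. cp s * (e0 \<bullet> s)) = 0" using v0 by simp
    moreover have nn: "\<And>s. s \<in> S \<Longrightarrow> cp s * (e0 \<bullet> s) \<ge> 0"
    proof -
      fix s assume "s \<in> S" then have "e0 \<bullet> s > 0" using pos SP by blast
      then show "cp s * (e0 \<bullet> s) \<ge> 0" unfolding cp_def by simp
    qed
    ultimately have z1: "\<forall>s\<in>S. cp s * (e0 \<bullet> s) = 0" using sum_nonneg_eq_0_iff[OF finS nn] by simp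
    have "e0 \<bullet> v = (\<Sum>s\<in>S. cn s * (e0 \<bullet> s))" by (subst v2) (simp add: inner_sum_right)
    then have "(\<Sum>s\<in>S. cn s * (e0 \<bullet> s)) = 0" using v0 by simp
    moreover have nn: "\<And>s. s \<in> S \<Longrightarrow> cn s * (e0 \<bullet> s) \<ge> 0"
    proof -
      fix s assume "s \<in> S" then have "e0 \<bullet> s > 0" using pos SP by blast
      then show "cn s * (e0 \<bullet> s) \<ge> 0" unfolding cn_def by simp
    qed
    ultimately have z2: "\<forall>s\<in>S. cn s * (e0 \<bullet> s) = 0" using sum_nonneg_eq_0_iff[OF finS nn] by simp
    fix w assume "w \<in> S"
    then have "e0 \<bullet> w > 0" using pos SP by blast
    then have "cp w = 0" "cn w = 0" using z1 z2 \<open>w \<in> S\<close> by auto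
    then show "c w = 0" using cpn by simp
  qed
  have "simple_system \<Phi> S"
    unfolding simple_system_def
  proof (intro conjI ballI)
    show "S \<subseteq> \<Phi>" using SP PPhi by blast
    show "independent S" by (rule indep)
    fix \<alpha> assume "\<alpha> \<in> \<Phi>"
    from dich[OF this] show "\<exists>c. \<alpha> = (\<Sum>s\<in>S. c s *\<^sub>R s) \<and> ((\<forall>s\<in>S. 0 \<le> c s) \<or> (\<forall>s\<in>S. c s \<le> 0))"
    proof
      assume "\<alpha> \<in> P"
      then show ?thesis using PS unfolding ncone_def by blast
    next
      assume "- \<alpha> \<in> P"
      then obtain c where c: "\<forall>s\<in>S. c s \<ge> 0" "- \<alpha> = (\<Sum>s\<in>S. c s *\<^sub>R s)"
        using PS unfolding ncone_def by blast
      have "(\<Sum>s\<in>S. (- c s) *\<^sub>R s) = - (\<Sum>s\<in>S. c s *\<^sub>R s)" by (simp add: sum_negf)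
      then have "\<alpha> = (\<Sum>s\<in>S. (- c s) *\<^sub>R s)" using c(2) by (metis minus_minus)
      then show ?thesis using c(1) by (intro exI[of _ "\<lambda>s. - c s"]) auto
    qed
  qed
  then show ?thesis using SP unfolding P_def by blast
qed

lemma poscoef:
  assumes S: "simple_system \<Phi> S" and SP: "S \<subseteq> pos_roots \<Phi> C" and e0: "e0 \<in> C"
    and a: "\<alpha> \<in> pos_roots \<Phi> C"
  shows "\<exists>c. \<alpha> = (\<Sum>s\<in>S. c s *\<^sub>R s) \<and> (\<forall>s\<in>S. c s \<ge> 0)"
proof -
  have "\<alpha> \<in> \<Phi>" using a unfolding pos_roots_def by blast
  then obtain c where c: "\<alpha> = (\<Sum>s\<in>S. c s *\<^sub>R s)" "(\<forall>s\<in>S. 0 \<le> c s) \<or> (\<forall>s\<in>S. c s \<le> 0)"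
    using S unfolding simple_system_def by blast
  have "\<not> (\<forall>s\<in>S. c s \<le> 0) \<or> (\<forall>s\<in>S. 0 \<le> c s)"
  proof (rule ccontr)
    assume "\<not> ?thesis"
    then have neg: "\<forall>s\<in>S. c s \<le> 0" by blast
    have "e0 \<bullet> \<alpha> = (\<Sum>s\<in>S. c s * (e0 \<bullet> s))" unfolding c(1) by (simp add: inner_sum_right)
    also have "\<dots> \<le> 0"
    proof (rule sum_nonpos)
      fix s assume "s \<in> S"
      then have "e0 \<bullet> s > 0" using SP e0 unfolding pos_roots_def by blast
      then show "c s * (e0 \<bullet> s) \<le> 0" using neg \<open>s \<in> S\<close> by (simp add: mult_nonpos_nonneg)
    qed
    finally show False using a e0 unfolding pos_roots_def by fastforce
  qed
  then show ?thesis using c by blast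
qed

lemma simple_unique_sub:
  assumes rs: "root_system \<Phi>" and Cne: "C \<noteq> {}"
    and S: "simple_system \<Phi> S" and SP: "S \<subseteq> pos_roots \<Phi> C"
    and S': "simple_system \<Phi> S'" and S'P: "S' \<subseteq> pos_roots \<Phi> C"
  shows "S' \<subseteq> S"
proof
  obtain e0 where e0: "e0 \<in> C" using Cne by blast
  have finS: "finite S" and finS': "finite S'" and indS': "independent S'"
    using S S' rs unfolding simple_system_def root_system_def by (auto intro: finite_subset)
  fix s' assume s': "s' \<in> S'"
  obtain c where c: "s' = (\<Sum>s\<in>S. c s *\<^sub>R s)" "\<forall>s\<in>S. c s \<ge> 0"
    using poscoef[OF S SP e0] s' S'P by blast
  have "\<forall>s\<in>S. \<exists>d. s = (\<Sum>t\<in>S'. d t *\<^sub>R t) \<and> (\<forall>t\<in>S'. d t \<ge> 0)"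
    using poscoef[OF S' S'P e0] SP by blast
  then obtain d where d: "\<And>s. s \<in> S \<Longrightarrow> s = (\<Sum>t\<in>S'. d s t *\<^sub>R t) \<and> (\<forall>t\<in>S'. d s t \<ge> 0)"
    by metis
  have "s' = (\<Sum>s\<in>S. c s *\<^sub>R (\<Sum>t\<in>S'. d s t *\<^sub>R t))"
    using c(1) d by (metis (no_types, lifting) sum.cong)
  also have "\<dots> = (\<Sum>t\<in>S'. (\<Sum>s\<in>S. c s * d s t) *\<^sub>R t)"
    by (simp add: scaleR_sum_right scaleR_sum_left sum.swap[of _ S])
  finally have e1: "(\<Sum>t\<in>S'. (\<Sum>s\<in>S. c s * d s t) *\<^sub>R t) = (\<Sum>t\<in>S'. (if t = s' then 1 else 0) *\<^sub>R t)"
    using sum_delta_scaleR[OF finS' s'] by simp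
  have coef: "(\<Sum>s\<in>S. c s * d s t) = (if t = s' then 1 else 0)" if "t \<in> S'" for t
    using uniq_rep[OF indS' e1 that] .
  have s'nz: "s' \<noteq> 0" using rs_nz[OF rs] S' s' unfolding simple_system_def by blast
  obtain s0 where s0: "s0 \<in> S" "c s0 > 0"
  proof (rule ccontr)
    assume "\<not> thesis"
    then have "\<forall>s\<in>S. c s = 0" using c(2) that by force
    then have "s' = 0" using c(1) by simp
    then show False using s'nz by simp
  qed
  have dz: "d s0 t = 0" if "t \<in> S'" "t \<noteq> s'" for t
  proof -
    have "(\<Sum>s\<in>S. c s * d s t) = 0" using coef[OF that(1)] that(2) by simp
    moreover have nn: "\<And>s. s \<in> S \<Longrightarrow> c s * d s t \<ge> 0" using c(2) d that(1) by (simp add: mult_nonneg_nonneg)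
    ultimately have "\<forall>s\<in>S. c s * d s t = 0" using sum_nonneg_eq_0_iff[OF finS nn] by simp
    then have "c s0 * d s0 t = 0" using s0(1) by blast
    then show ?thesis using s0(2) by simp
  qed
  have "s0 = (\<Sum>t\<in>S'. d s0 t *\<^sub>R t)" using d[OF s0(1)] by blast
  also have "\<dots> = (\<Sum>t\<in>S'. (if t = s' then d s0 s' else 0) *\<^sub>R t)"
    by (rule sum.cong) (auto simp: dz)
  also have "\<dots> = d s0 s' *\<^sub>R s'" by (rule sum_delta_scaleR[OF finS' s'])
  finally have s0eq: "s0 = d s0 s' *\<^sub>R s'" .
  have "s0 \<in> \<Phi>" "s' \<in> \<Phi>" using S S' s0(1) s' unfolding simple_system_def by auto
  then have "d s0 s' = 1 \<or> d s0 s' = -1" using rs_reduced[OF rs, of s' "d s0 s'"] s0eq by simp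
  moreover have "d s0 s' \<ge> 0" using d[OF s0(1)] s' by blast
  ultimately have "s0 = s'" using s0eq by auto
  then show "s' \<in> S" using s0(1) by simp
qed

lemma simple_roots_props:
  assumes rs: "root_system \<Phi>" and C: "C \<in> chambers \<Phi>"
  shows "simple_system \<Phi> (simple_roots \<Phi> C) \<and> simple_roots \<Phi> C \<subseteq> pos_roots \<Phi> C"
    and "simple_system \<Phi> S \<Longrightarrow> S \<subseteq> pos_roots \<Phi> C \<Longrightarrow> simple_roots \<Phi> C = S"
proof -
  obtain S0 where S0: "simple_system \<Phi> S0 \<and> S0 \<subseteq> pos_roots \<Phi> C" using exists_simple[OF rs C] by blast
  have Cne: "C \<noteq> {}" by (rule chamber_ne[OF C])
  have uq: "S = S0" if h: "simple_system \<Phi> S \<and> S \<subseteq> pos_roots \<Phi> C" for S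
  proof (rule subset_antisym)
    show "S \<subseteq> S0" using simple_unique_sub[OF rs Cne, of S0 S] S0 h by blast
    show "S0 \<subseteq> S" using simple_unique_sub[OF rs Cne, of S S0] S0 h by blast
  qed
  have th: "simple_roots \<Phi> C = S0" unfolding simple_roots_def
    by (rule the_equality, rule S0, rule uq, assumption)
  show "simple_system \<Phi> (simple_roots \<Phi> C) \<and> simple_roots \<Phi> C \<subseteq> pos_roots \<Phi> C"
    using th S0 by simp
  show "simple_system \<Phi> S \<Longrightarrow> S \<subseteq> pos_roots \<Phi> C \<Longrightarrow> simple_roots \<Phi> C = S"
    using th uq by simp
qed

lemma chamber_of_props:
  assumes D: "D \<in> chambers \<Phi>" and sub: "\<Psi> \<subseteq> \<Phi>"
  shows "chamber_of \<Psi> D \<in> chambers \<Psi> \<and> D \<subseteq> chamber_of \<Psi> D"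
proof -
  define U where "U = UNIV - (\<Union>\<alpha>\<in>\<Psi>. hyperplane \<alpha>)"
  have "D \<subseteq> UNIV - (\<Union>\<alpha>\<in>\<Phi>. hyperplane \<alpha>)" using D unfolding chambers_def by (rule in_components_subset)
  then have DU: "D \<subseteq> U" using sub unfolding U_def by blast
  have Dne: "D \<noteq> {}" by (rule chamber_ne[OF D])
  have Dc: "connected D" using D unfolding chambers_def by (rule in_components_connected)
  have Une: "U \<noteq> {}" using DU Dne by blast
  obtain F where F: "F \<in> components U" "D \<subseteq> F"
    using exists_component_superset[OF DU Une Dc] by blast
  have uq: "F' = F" if "F' \<in> components U \<and> D \<subseteq> F'" for F'
  proof -
    have "F' \<inter> F \<noteq> {}" using that F(2) Dne by blast
    then show ?thesis using components_nonoverlap[of F' U F] that F(1) by simp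
  qed
  have FF: "F \<in> components U \<and> D \<subseteq> F" using F by simp
  have "chamber_of \<Psi> D = F" unfolding chamber_of_def chambers_def U_def[symmetric]
    by (rule the_equality, rule FF, rule uq, assumption)
  then show ?thesis using F unfolding chambers_def U_def by simp
qed

lemma pos_roots_chamber_of:
  assumes D: "D \<in> chambers \<Phi>" and sub: "\<Psi> \<subseteq> \<Phi>"
  shows "pos_roots \<Psi> (chamber_of \<Psi> D) = \<Psi> \<inter> pos_roots \<Phi> D"
proof -
  have F: "chamber_of \<Psi> D \<in> chambers \<Psi>" "D \<subseteq> chamber_of \<Psi> D" using chamber_of_props[OF D sub] by auto
  obtain e where e: "e \<in> D" using chamber_ne[OF D] by blast
  show ?thesis
  proof
    show "pos_roots \<Psi> (chamber_of \<Psi> D) \<subseteq> \<Psi> \<inter> pos_roots \<Phi> D"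
      using F(2) sub unfolding pos_roots_def by blast
    show "\<Psi> \<inter> pos_roots \<Phi> D \<subseteq> pos_roots \<Psi> (chamber_of \<Psi> D)"
    proof
      fix \<alpha> assume a: "\<alpha> \<in> \<Psi> \<inter> pos_roots \<Phi> D"
      then have "e \<bullet> \<alpha> > 0" using e unfolding pos_roots_def by blast
      then have "\<forall>x\<in>chamber_of \<Psi> D. x \<bullet> \<alpha> > 0"
        using chamber_sign[OF F(1), of \<alpha>] a e F(2) by force
      then show "\<alpha> \<in> pos_roots \<Psi> (chamber_of \<Psi> D)" using a unfolding pos_roots_def by blast
    qed
  qed
qed

lemma simple_restrict:
  assumes S: "simple_system \<Phi> S" and TS: "T \<subseteq> S"
  shows "simple_system (span T \<inter> \<Phi>) T"
  unfolding simple_system_def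
proof (intro conjI ballI)
  have indS: "independent S" using S unfolding simple_system_def by blast
  then have finS: "finite S" using independent_explicit by blast
  have finT: "finite T" using finS TS finite_subset by blast
  have "T \<subseteq> span T" by (rule span_superset)
  moreover have "T \<subseteq> \<Phi>" using S TS unfolding simple_system_def by blast
  ultimately show "T \<subseteq> span T \<inter> \<Phi>" by blast
  show "independent T" by (rule independent_mono[OF indS TS])
  fix \<alpha> assume a: "\<alpha> \<in> span T \<inter> \<Phi>"
  then obtain c where c: "\<alpha> = (\<Sum>s\<in>S. c s *\<^sub>R s)" "(\<forall>s\<in>S. 0 \<le> c s) \<or> (\<forall>s\<in>S. c s \<le> 0)"
    using S unfolding simple_system_def by blast
  have "\<alpha> \<in> range (\<lambda>u. \<Sum>v\<in>T. u v *\<^sub>R v)" using a span_finite[OF finT] by simp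
  then obtain u where u: "\<alpha> = (\<Sum>t\<in>T. u t *\<^sub>R t)" by (rule rangeE)
  have "(\<Sum>s\<in>S. (if s \<in> T then u s else 0) *\<^sub>R s) = (\<Sum>s\<in>S. if s \<in> T then u s *\<^sub>R s else 0)"
    by (rule sum.cong) auto
  also have "\<dots> = (\<Sum>s\<in>S \<inter> T. u s *\<^sub>R s)" using finS by (simp add: sum.inter_restrict)
  also have "\<dots> = \<alpha>" using TS u by (simp add: Int_absorb1)
  finally have "(\<Sum>s\<in>S. c s *\<^sub>R s) = (\<Sum>s\<in>S. (if s \<in> T then u s else 0) *\<^sub>R s)" using c(1) by simp
  then have cu: "c t = u t" if "t \<in> T" for t
  proof -
    have "t \<in> S" using that TS by blast
    then have "c t = (if t \<in> T then u t else 0)" by (rule uniq_rep[OF indS \<open>(\<Sum>s\<in>S. c s *\<^sub>R s) = _\<close>])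
    then show ?thesis using that by simp
  qed
  have "\<alpha> = (\<Sum>t\<in>T. c t *\<^sub>R t)" unfolding u by (rule sum.cong) (use cu in auto)
  moreover have "(\<forall>t\<in>T. 0 \<le> c t) \<or> (\<forall>t\<in>T. c t \<le> 0)" using c(2) TS by blast
  ultimately show "\<exists>c. \<alpha> = (\<Sum>s\<in>T. c s *\<^sub>R s) \<and> ((\<forall>s\<in>T. 0 \<le> c s) \<or> (\<forall>s\<in>T. c s \<le> 0))"
    by blast
qed

lemma simple_rep:
  "simple_system \<Phi> S \<Longrightarrow> \<alpha> \<in> \<Phi> \<Longrightarrow> \<exists>c. \<alpha> = (\<Sum>s\<in>S. c s *\<^sub>R s) \<and> ((\<forall>s\<in>S. 0 \<le> c s) \<or> (\<forall>s\<in>S. c s \<le> 0))"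
  unfolding simple_system_def by blast

lemma generated_closure:
  assumes rs: "root_system R" and T: "simple_system R T" and TPsi: "T \<subseteq> \<Psi>"
    and cl: "\<forall>a\<in>\<Psi>. \<forall>b\<in>\<Psi>. refl_vec a b \<in> \<Psi>"
  shows "R \<subseteq> \<Psi>"
proof -
  have indT: "independent T" and TR: "T \<subseteq> R" using T unfolding simple_system_def by auto
  have finT: "finite T" using indT independent_explicit by blast
  have finR: "finite R" using rs unfolding root_system_def by blast
  obtain h where h: "linear h" "\<And>t. t \<in> T \<Longrightarrow> h t = (1::real)"
    using linear_independent_extend[OF indT, of "\<lambda>_. 1"] by blast
  have pos_case: "\<alpha> \<in> \<Psi>" if "\<alpha> \<in> R" "\<exists>c. \<alpha> = (\<Sum>t\<in>T. c t *\<^sub>R t) \<and> (\<forall>t\<in>T. c t \<ge> 0)" for \<alpha>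
    using that
  proof (induction "card {\<beta>\<in>R. h \<beta> < h \<alpha>}" arbitrary: \<alpha> rule: less_induct)
    case less
    obtain c where c: "\<alpha> = (\<Sum>t\<in>T. c t *\<^sub>R t)" "\<forall>t\<in>T. c t \<ge> 0" using less.prems(2) by blast
    show ?case
    proof (cases "\<alpha> \<in> T")
      case True then show ?thesis using TPsi by blast
    next
      case notT: False
      have anz: "\<alpha> \<noteq> 0" using rs_nz[OF rs less.prems(1)] .
      obtain t where t: "t \<in> T" "c t > 0" "t \<bullet> \<alpha> > 0"
      proof (rule ccontr)
        assume "\<not> thesis"
        have le: "\<forall>t\<in>T. c t * (t \<bullet> \<alpha>) \<le> 0"
        proof
          fix t assume tT: "t \<in> T"
          show "c t * (t \<bullet> \<alpha>) \<le> 0"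
          proof (cases "c t > 0")
            case True
            then have "\<not> t \<bullet> \<alpha> > 0" using that tT \<open>\<not> thesis\<close> by blast
            then show ?thesis using True by (simp add: mult_nonneg_nonpos)
          next
            case False
            then have "c t = 0" using c(2) tT by force
            then show ?thesis by simp
          qed
        qed
        have "\<alpha> \<bullet> \<alpha> = (\<Sum>t\<in>T. c t * (t \<bullet> \<alpha>))" by (subst (1) c(1)) (simp add: inner_sum_left)
        also have "\<dots> \<le> 0" using le by (simp add: sum_nonpos)
        finally show False using anz by (metis inner_gt_zero_iff not_le)
      qed
      have tnz: "t \<noteq> 0" using rs_nz[OF rs] TR t(1) by blast
      define k where "k = 2 * (\<alpha> \<bullet> t) / (t \<bullet> t)"
      have kp: "k > 0" using t(3) tnz by (simp add: k_def inner_commute)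
      define \<beta> where "\<beta> = refl_vec t \<alpha>"
      have beq: "\<beta> = \<alpha> - k *\<^sub>R t" unfolding \<beta>_def refl_vec_def k_def ..
      have bR: "\<beta> \<in> R" using rs less.prems(1) TR t(1) unfolding root_system_def \<beta>_def by blast
      obtain u where u: "u \<in> T" "u \<noteq> t" "c u > 0"
      proof (rule ccontr)
        assume "\<not> thesis"
        then have z: "\<forall>v\<in>T. v \<noteq> t \<longrightarrow> c v = 0" using c(2) that by force
        have "\<alpha> = (\<Sum>v\<in>T. (if v = t then c t else 0) *\<^sub>R v)"
          unfolding c(1) by (rule sum.cong) (use z in auto)
        also have "\<dots> = c t *\<^sub>R t" by (rule sum_delta_scaleR[OF finT t(1)])
        finally have at: "\<alpha> = c t *\<^sub>R t" .
        then have "c t = 1 \<or> c t = -1" using rs_reduced[OF rs, of t "c t"] less.prems(1) TR t(1) by auto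
        then have "\<alpha> = t" using at t(2) by auto
        then show False using notT t(1) by simp
      qed
      have "\<beta> = (\<Sum>v\<in>T. c v *\<^sub>R v) - (\<Sum>v\<in>T. (if v = t then k else 0) *\<^sub>R v)"
        unfolding beq sum_delta_scaleR[OF finT t(1)] c(1)[symmetric] ..
      then have brep: "\<beta> = (\<Sum>v\<in>T. (c v - (if v = t then k else 0)) *\<^sub>R v)"
        by (simp add: scaleR_diff_left sum_subtractf)
      obtain c' where c': "\<beta> = (\<Sum>v\<in>T. c' v *\<^sub>R v)" "(\<forall>v\<in>T. 0 \<le> c' v) \<or> (\<forall>v\<in>T. c' v \<le> 0)"
        using simple_rep[OF T bR] by auto
      have eqs: "(\<Sum>v\<in>T. c' v *\<^sub>R v) = (\<Sum>v\<in>T. (c v - (if v = t then k else 0)) *\<^sub>R v)"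
        by (simp only: c'(1)[symmetric] brep[symmetric])
      have "c' u = c u - (if u = t then k else 0)"
        by (rule uniq_rep[OF indT eqs u(1)])
      then have "c' u > 0" using u by simp
      have c'pos: "\<forall>v\<in>T. 0 \<le> c' v"
      proof -
        have "\<not> (\<forall>v\<in>T. c' v \<le> 0)"
        proof
          assume "\<forall>v\<in>T. c' v \<le> 0"
          then have "c' u \<le> 0" using u(1) by blast
          then show False using \<open>c' u > 0\<close> by simp
        qed
        then show ?thesis using c'(2) by blast
      qed
      have hk: "h (k *\<^sub>R t) = k" using linear_scale[OF h(1), of k t] h(2)[OF t(1)] by simp
      have "h \<beta> = h \<alpha> - h (k *\<^sub>R t)" unfolding beq by (rule linear_diff[OF h(1)])
      then have hb: "h \<beta> = h \<alpha> - k" unfolding hk .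
      have sub: "{\<gamma>\<in>R. h \<gamma> < h \<beta>} \<subseteq> {\<gamma>\<in>R. h \<gamma> < h \<alpha>}"
      proof
        fix \<gamma> assume "\<gamma> \<in> {\<gamma>\<in>R. h \<gamma> < h \<beta>}"
        then have "\<gamma> \<in> R" "h \<gamma> < h \<beta>" by auto
        moreover have "h \<beta> < h \<alpha>" using hb kp by linarith
        ultimately show "\<gamma> \<in> {\<gamma>\<in>R. h \<gamma> < h \<alpha>}" by simp
      qed
      have n1: "\<beta> \<notin> {\<gamma>\<in>R. h \<gamma> < h \<beta>}" by simp
      have n2: "\<beta> \<in> {\<gamma>\<in>R. h \<gamma> < h \<alpha>}" using bR hb kp by simp
      have "{\<gamma>\<in>R. h \<gamma> < h \<beta>} \<subset> {\<gamma>\<in>R. h \<gamma> < h \<alpha>}"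
        using sub n1 n2 by blast
      then have cardlt: "card {\<gamma>\<in>R. h \<gamma> < h \<beta>} < card {\<gamma>\<in>R. h \<gamma> < h \<alpha>}"
        using finR by (intro psubset_card_mono) auto
      have ex: "\<exists>c. \<beta> = (\<Sum>t\<in>T. c t *\<^sub>R t) \<and> (\<forall>t\<in>T. c t \<ge> 0)"
        using c'(1) c'pos by blast
      have "\<beta> \<in> \<Psi>" by (rule less.hyps[OF cardlt bR ex])
      then have "refl_vec t \<beta> \<in> \<Psi>" using cl TPsi t(1) by blast
      then show ?thesis unfolding \<beta>_def refl_invol[OF tnz] .
    qed
  qed
  show ?thesis
  proof
    fix \<alpha> assume a: "\<alpha> \<in> R"
    obtain c where c: "\<alpha> = (\<Sum>v\<in>T. c v *\<^sub>R v)" "(\<forall>v\<in>T. 0 \<le> c v) \<or> (\<forall>v\<in>T. c v \<le> 0)"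
      using simple_rep[OF T a] by blast
    from c(2) show "\<alpha> \<in> \<Psi>"
    proof
      assume "\<forall>v\<in>T. 0 \<le> c v"
      then have "\<exists>c. \<alpha> = (\<Sum>v\<in>T. c v *\<^sub>R v) \<and> (\<forall>v\<in>T. c v \<ge> 0)" using c(1) by blast
      then show ?thesis by (rule pos_case[OF a])
    next
      assume neg: "\<forall>v\<in>T. c v \<le> 0"
      have "- \<alpha> = (\<Sum>v\<in>T. (- c v) *\<^sub>R v)" using c(1) by (simp add: sum_negf)
      then have "\<exists>c. - \<alpha> = (\<Sum>v\<in>T. c v *\<^sub>R v) \<and> (\<forall>v\<in>T. c v \<ge> 0)"
        using neg by (intro exI[of _ "\<lambda>v. - c v"]) auto
      then have m: "- \<alpha> \<in> \<Psi>" by (rule pos_case[OF rs_neg[OF rs a]])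
      have "- \<alpha> \<noteq> 0" using rs_nz[OF rs a] by simp
      then have e: "refl_vec (- \<alpha>) (- \<alpha>) = \<alpha>" using refl_self[of "- \<alpha>"] by simp
      have "refl_vec (- \<alpha>) (- \<alpha>) \<in> \<Psi>" using cl m by blast
      then show ?thesis unfolding e .
    qed
  qed
qed

theorem lemma2:
  fixes \<Phi> \<Psi> :: "'a::euclidean_space set" and C D :: "'a set"
  assumes "root_system \<Phi>"
    and "C \<in> chambers \<Phi>" and "D \<in> chambers \<Phi>"
    and "root_subsystem \<Phi> \<Psi>"
  shows "(lifts \<Phi> \<Psi> C (chamber_of \<Psi> D) \<longleftrightarrow>
            (\<exists>X. X \<subseteq> simple_roots \<Phi> C \<inter> pos_roots \<Phi> D \<and> \<Psi> = span X \<inter> \<Phi>))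
         \<and> (lifts \<Phi> \<Psi> C (chamber_of \<Psi> D) \<longrightarrow>
            (let X = simple_roots \<Psi> (chamber_of \<Psi> D) in
              X \<subseteq> simple_roots \<Phi> C \<inter> pos_roots \<Phi> D \<and> \<Psi> = span X \<inter> \<Phi>))"
proof -
  note rs = assms(1) and C = assms(2) and D = assms(3)
  have PsiPhi: "\<Psi> \<subseteq> \<Phi>" and Psicl: "\<forall>a\<in>\<Psi>. \<forall>b\<in>\<Psi>. refl_vec a b \<in> \<Psi>"
    using assms(4) unfolding root_subsystem_def by auto
  have rsPsi: "root_system \<Psi>" by (rule rs_sub[OF rs PsiPhi Psicl])
  define F where "F = chamber_of \<Psi> D"
  have F: "F \<in> chambers \<Psi>" "D \<subseteq> F" using chamber_of_props[OF D PsiPhi] unfolding F_def by auto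
  have posF: "pos_roots \<Psi> F = \<Psi> \<inter> pos_roots \<Phi> D"
    unfolding F_def by (rule pos_roots_chamber_of[OF D PsiPhi])
  have SC: "simple_system \<Phi> (simple_roots \<Phi> C)" using simple_roots_props(1)[OF rs C] by blast
  have SF: "simple_system \<Psi> (simple_roots \<Psi> F)" "simple_roots \<Psi> F \<subseteq> pos_roots \<Psi> F"
    using simple_roots_props(1)[OF rsPsi F(1)] by auto
  have fwd: "simple_roots \<Psi> F \<subseteq> simple_roots \<Phi> C \<inter> pos_roots \<Phi> D \<and> \<Psi> = span (simple_roots \<Psi> F) \<inter> \<Phi>"
    if L: "lifts \<Phi> \<Psi> C F"
  proof -
    define T where "T = simple_roots \<Psi> F"
    have T1: "T \<subseteq> simple_roots \<Phi> C" using L unfolding lifts_def T_def .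
    have T2: "T \<subseteq> pos_roots \<Phi> D" using SF(2) posF unfolding T_def by blast
    have TPsi: "T \<subseteq> \<Psi>" using SF(1) unfolding T_def simple_system_def by blast
    have "\<Psi> \<subseteq> span T"
    proof
      fix \<alpha> assume "\<alpha> \<in> \<Psi>"
      then obtain c where ac: "\<alpha> = (\<Sum>t\<in>T. c t *\<^sub>R t)" using simple_rep[OF SF(1)] unfolding T_def by blast
      have "(\<Sum>t\<in>T. c t *\<^sub>R t) \<in> span T"
        by (rule span_sum, rule span_scale, rule span_base, assumption)
      then show "\<alpha> \<in> span T" unfolding ac .
    qed
    moreover have "span T \<inter> \<Phi> \<subseteq> \<Psi>"
      by (rule generated_closure[OF rs_span[OF rs] simple_restrict[OF SC T1] TPsi Psicl])
    ultimately have "\<Psi> = span T \<inter> \<Phi>" using PsiPhi by blast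
    then show ?thesis using T1 T2 unfolding T_def by blast
  qed
  have bwd: "lifts \<Phi> \<Psi> C F"
    if X: "X \<subseteq> simple_roots \<Phi> C \<inter> pos_roots \<Phi> D" "\<Psi> = span X \<inter> \<Phi>" for X
  proof -
    have sX: "simple_system \<Psi> X" unfolding X(2) by (rule simple_restrict[OF SC]) (use X in blast)
    have "X \<subseteq> \<Psi>" using sX unfolding simple_system_def by blast
    then have "X \<subseteq> pos_roots \<Psi> F" using posF X(1) by blast
    then have "simple_roots \<Psi> F = X" using simple_roots_props(2)[OF rsPsi F(1) sX] by blast
    then show ?thesis unfolding lifts_def using X(1) by blast
  qed
  have eqv: "lifts \<Phi> \<Psi> C F \<longleftrightarrow> (\<exists>X. X \<subseteq> simple_roots \<Phi> C \<inter> pos_roots \<Phi> D \<and> \<Psi> = span X \<inter> \<Phi>)"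
  proof
    assume L: "lifts \<Phi> \<Psi> C F"
    show "\<exists>X. X \<subseteq> simple_roots \<Phi> C \<inter> pos_roots \<Phi> D \<and> \<Psi> = span X \<inter> \<Phi>"
      by (rule exI[of _ "simple_roots \<Psi> F"]) (rule fwd[OF L])
  next
    assume "\<exists>X. X \<subseteq> simple_roots \<Phi> C \<inter> pos_roots \<Phi> D \<and> \<Psi> = span X \<inter> \<Phi>"
    then obtain X where "X \<subseteq> simple_roots \<Phi> C \<inter> pos_roots \<Phi> D" "\<Psi> = span X \<inter> \<Phi>"
      by (elim exE conjE)
    then show "lifts \<Phi> \<Psi> C F" by (rule bwd)
  qed
  have mo: "lifts \<Phi> \<Psi> C F \<longrightarrow> (let X = simple_roots \<Psi> F in
              X \<subseteq> simple_roots \<Phi> C \<inter> pos_roots \<Phi> D \<and> \<Psi> = span X \<inter> \<Phi>)"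
    unfolding Let_def using fwd by (intro impI)
  show ?thesis unfolding F_def[symmetric] using eqv mo by (rule conjI)
qed

end
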